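(* Let $\mathcal{H}$ be a finite-dimensional complex Hilbert space, let $\ket{\psi_1},\ket{\psi_2}\in\mathcal{H}$ be pure states, let $\rho=\tfrac12(\ket{\psi_1}\!\bra{\psi_1}+\ket{\psi_2}\!\bra{\psi_2})$, and let $\alpha,\beta\in[0,1]$. Then for every ontological model (as defined in the context) for these preparations, $$\omega_Q(\psi_1,\psi_2;\alpha,\beta)-\omega_{\Lambda}(\psi_1,\psi_2;\alpha,\beta)\geq B_Q(\psi_1,\psi_2,\rho;\alpha,\beta),$$ where $$B_Q(\psi_1,\psi_2,\rho;\alpha,\beta)=2\Big((1-\alpha)D_Q(\psi_1,\psi_2)+D_Q\big(\{\psi_1,\tfrac{1+\beta}{2}\},\{\rho,\alpha+\beta\}\big)+D_Q\big(\{\psi_2,\tfrac{1+\beta}{2}\},\{\rho,\alpha+\beta\}\big)-S^{Gam}_Q(\psi_1,\psi_2;\alpha,\beta)-2\beta-1\Big).$$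
   Context: Probabilities: for a (pure or mixed) state $\sigma$ and a POVM $\mathcal{M}=\{M_k\}_k$, $p(k|\sigma,\mathcal{M})=\mathrm{Tr}(\sigma M_k)$. Weighted distinguishability: for states $\phi_1,\phi_2$ and weights $w_1,w_2\ge 0$, $D_Q(\{\phi_1,w_1\},\{\phi_2,w_2\})=\max_{\mathcal{M}}\big(w_1p(1|\phi_1,\mathcal{M})+w_2p(2|\phi_2,\mathcal{M})\big)$, the maximum over all two-outcome POVMs $\mathcal{M}=\{M_1,M_2\}$. Write $D_Q(\psi_1,\psi_2)=D_Q(\{\psi_1,\tfrac12\},\{\psi_2,\tfrac12\})$. Quantum gambling value: $S^{Gam}_Q(\psi_1,\psi_2;\alpha,\beta)=\tfrac12\max_{\mathcal{M}}\big(p(1|\psi_1,\mathcal{M})-\beta p(2|\psi_1,\mathcal{M})+\alpha p(3|\psi_1,\mathcal{M})+p(2|\psi_2,\mathcal{M})-\beta p(1|\psi_2,\mathcal{M})+\alpha p(3|\psi_2,\mathcal{M})\big)$, maximum over all three-outcome POVMs $\mathcal{M}=\{M_1,M_2,M_3\}$. The generalized quantum overlap is $\omega_Q(\psi_1,\psi_2;\alpha,\beta)=2\big(1-S^{Gam}_Q(\psi_1,\psi_2;\alpha,\beta)\big)$. Ontological model: a measure space $(\Lambda,d\lambda)$ (ontic state space); to each preparation $\sigma\in\{\psi_1,\psi_2,\rho\}$ a probability density $\mu(\lambda|\sigma)\ge0$, $\int_\Lambda\mu(\lambda|\sigma)d\lambda=1$ (epistemic state); to each $n$-outcome POVM $\mathcal{M}=\{M_k\}$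 response functions $\xi(k|\lambda,\mathcal{M})\ge0$ with $\sum_k\xi(k|\lambda,\mathcal{M})=1$ for all $\lambda$; such that $\mathrm{Tr}(\sigma M_k)=\int_\Lambda\mu(\lambda|\sigma)\xi(k|\lambda,\mathcal{M})d\lambda$ for all such $\sigma,\mathcal{M},k$. Moreover the epistemic state of the mixture respects its convex decomposition: $\mu(\lambda|\rho)=\tfrac12(\mu(\lambda|\psi_1)+\mu(\lambda|\psi_2))$ for all $\lambda$. Generalized epistemic overlap: with $\tilde\mu_1=(1+\beta)\mu(\cdot|\psi_1)$, $\tilde\mu_2=(1+\beta)\mu(\cdot|\psi_2)$, $\tilde\mu_3=(\alpha+\beta)(\mu(\cdot|\psi_1)+\mu(\cdot|\psi_2))$, $\omega_\Lambda(\psi_1,\psi_2;\alpha,\beta)=\int_\Lambda\min(\tilde\mu_1,\tilde\mu_2)d\lambda+\int_\Lambda\min(\tilde\mu_1,\tilde\mu_3)d\lambda+\int_\Lambda\min(\tilde\mu_2,\tilde\mu_3)d\lambda-2(\alpha+\beta)-\int_\Lambda\min(\tilde\mu_1,\tilde\mu_2,\tilde\mu_3)d\lambda$. *)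

theory Defs
  imports "HOL-Analysis.Analysis" "HOL-Probability.Probability" "Jordan_Normal_Form.Matrix"
begin

text \<open>Finite-dimensional complex Hilbert space = complex column vectors of length n.
 Operators are n x n complex matrices (Jordan_Normal_Form).\<close>

definition psd :: "nat \<Rightarrow> complex mat \<Rightarrow> bool" where
  "psd n A \<longleftrightarrow> A \<in> carrier_mat n n \<and>
     (\<forall>v \<in> carrier_vec n.
        (\<Sum>i<n. \<Sum>j<n. cnj (v $ i) * A $$ (i, j) * v $ j) \<in> \<real> \<and>
        0 \<le> Re (\<Sum>i<n. \<Sum>j<n. cnj (v $ i) * A $$ (i, j) * v $ j))"

text \<open>A POVM with outcomes 1..length Ms: the outcome k corresponds to Ms ! (k - 1).\<close>
definition povm :: "nat \<Rightarrow> complex mat list \<Rightarrow> bool" where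
  "povm n Ms \<longleftrightarrow> (\<forall>M \<in> set Ms. psd n M) \<and>
     (\<forall>i<n. \<forall>j<n. (\<Sum>M\<leftarrow>Ms. M $$ (i, j)) = (if i = j then 1 else 0))"

definition mat_trace :: "complex mat \<Rightarrow> complex" where
  "mat_trace A = (\<Sum>i<dim_row A. A $$ (i, i))"

definition prob :: "complex mat \<Rightarrow> complex mat list \<Rightarrow> nat \<Rightarrow> real" where
  "prob \<sigma> Ms k = Re (mat_trace (\<sigma> * Ms ! (k - 1)))"

definition pure_state :: "nat \<Rightarrow> complex vec \<Rightarrow> bool" where
  "pure_state n \<psi> \<longleftrightarrow> \<psi> \<in> carrier_vec n \<and> (\<Sum>i<n. (cmod (\<psi> $ i))\<^sup>2) = 1"

definition proj :: "nat \<Rightarrow> complex vec \<Rightarrow> complex mat" where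
  "proj n \<psi> = mat n n (\<lambda>(i, j). \<psi> $ i * cnj (\<psi> $ j))"

definition mixture :: "nat \<Rightarrow> complex vec \<Rightarrow> complex vec \<Rightarrow> complex mat" where
  "mixture n \<psi>1 \<psi>2 = mat n n (\<lambda>(i, j). (proj n \<psi>1 $$ (i, j) + proj n \<psi>2 $$ (i, j)) / 2)"

text \<open>Weighted distinguishability (maximum over two-outcome POVMs, taken as a supremum).\<close>
definition DQw :: "nat \<Rightarrow> complex mat \<Rightarrow> real \<Rightarrow> complex mat \<Rightarrow> real \<Rightarrow> real" where
  "DQw n \<phi>1 w1 \<phi>2 w2 =
     Sup {w1 * prob \<phi>1 Ms 1 + w2 * prob \<phi>2 Ms 2 | Ms. povm n Ms \<and> length Ms = 2}"

definition DQ :: "nat \<Rightarrow> complex mat \<Rightarrow> complex mat \<Rightarrow> real" where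
  "DQ n \<psi>1 \<psi>2 = DQw n \<psi>1 (1/2) \<psi>2 (1/2)"

text \<open>Quantum gambling value (maximum over three-outcome POVMs, taken as a supremum).\<close>
definition SGamQ :: "nat \<Rightarrow> complex mat \<Rightarrow> complex mat \<Rightarrow> real \<Rightarrow> real \<Rightarrow> real" where
  "SGamQ n \<psi>1 \<psi>2 \<alpha> \<beta> = (1/2) * Sup
     {prob \<psi>1 Ms 1 - \<beta> * prob \<psi>1 Ms 2 + \<alpha> * prob \<psi>1 Ms 3
      + prob \<psi>2 Ms 2 - \<beta> * prob \<psi>2 Ms 1 + \<alpha> * prob \<psi>2 Ms 3 | Ms. povm n Ms \<and> length Ms = 3}"

definition omegaQ :: "nat \<Rightarrow> complex mat \<Rightarrow> complex mat \<Rightarrow> real \<Rightarrow> real \<Rightarrow> real" where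
  "omegaQ n \<psi>1 \<psi>2 \<alpha> \<beta> = 2 * (1 - SGamQ n \<psi>1 \<psi>2 \<alpha> \<beta>)"

definition BQ :: "nat \<Rightarrow> complex mat \<Rightarrow> complex mat \<Rightarrow> complex mat \<Rightarrow> real \<Rightarrow> real \<Rightarrow> real" where
  "BQ n \<psi>1 \<psi>2 \<rho> \<alpha> \<beta> = 2 * ((1 - \<alpha>) * DQ n \<psi>1 \<psi>2
      + DQw n \<psi>1 ((1 + \<beta>) / 2) \<rho> (\<alpha> + \<beta>)
      + DQw n \<psi>2 ((1 + \<beta>) / 2) \<rho> (\<alpha> + \<beta>)
      - SGamQ n \<psi>1 \<psi>2 \<alpha> \<beta> - 2 * \<beta> - 1)"

text \<open>Ontological model for the preparations psi1, psi2, rho (given as density matrices) on the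
 ontic measure space L: epistemic states mu and response functions xi (indexed by the POVM).\<close>
definition ontological_model ::
  "nat \<Rightarrow> complex mat \<Rightarrow> complex mat \<Rightarrow> complex mat \<Rightarrow> 'l measure
   \<Rightarrow> (complex mat \<Rightarrow> 'l \<Rightarrow> real) \<Rightarrow> (complex mat list \<Rightarrow> nat \<Rightarrow> 'l \<Rightarrow> real) \<Rightarrow> bool" where
  "ontological_model n \<psi>1 \<psi>2 \<rho> L mu xi \<longleftrightarrow>
     (\<forall>\<sigma> \<in> {\<psi>1, \<psi>2, \<rho>}.
        mu \<sigma> \<in> borel_measurable L \<and> integrable L (mu \<sigma>) \<and>
        (\<forall>l \<in> space L. 0 \<le> mu \<sigma> l) \<and> (\<integral>l. mu \<sigma> l \<partial>L) = 1) \<and>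
     (\<forall>Ms. povm n Ms \<longrightarrow>
        (\<forall>k \<in> {1..length Ms}. xi Ms k \<in> borel_measurable L \<and> (\<forall>l \<in> space L. 0 \<le> xi Ms k l)) \<and>
        (\<forall>l \<in> space L. (\<Sum>k = 1..length Ms. xi Ms k l) = 1) \<and>
        (\<forall>\<sigma> \<in> {\<psi>1, \<psi>2, \<rho>}. \<forall>k \<in> {1..length Ms}.
            prob \<sigma> Ms k = (\<integral>l. mu \<sigma> l * xi Ms k l \<partial>L))) \<and>
     (\<forall>l \<in> space L. mu \<rho> l = (mu \<psi>1 l + mu \<psi>2 l) / 2)"

definition omegaLambda :: "'l measure \<Rightarrow> ('l \<Rightarrow> real) \<Rightarrow> ('l \<Rightarrow> real) \<Rightarrow> real \<Rightarrow> real \<Rightarrow> real" where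
  "omegaLambda L mu1 mu2 \<alpha> \<beta> =
    (let t1 = (\<lambda>l. (1 + \<beta>) * mu1 l); t2 = (\<lambda>l. (1 + \<beta>) * mu2 l);
         t3 = (\<lambda>l. (\<alpha> + \<beta>) * (mu1 l + mu2 l))
     in (\<integral>l. min (t1 l) (t2 l) \<partial>L) + (\<integral>l. min (t1 l) (t3 l) \<partial>L)
        + (\<integral>l. min (t2 l) (t3 l) \<partial>L) - 2 * (\<alpha> + \<beta>)
        - (\<integral>l. min (min (t1 l) (t2 l)) (t3 l) \<partial>L))"

end

theory Submission
  imports Defs
begin

lemma dist_bound:
  fixes L :: "'l measure" and f g x1 x2 :: "'l \<Rightarrow> real" and w1 w2 :: real
  assumes fi: "integrable L f" and fp: "\<forall>l\<in>space L. 0 \<le> f l" and f1: "(\<integral>l. f l \<partial>L) = 1"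
    and gi: "integrable L g" and gp: "\<forall>l\<in>space L. 0 \<le> g l" and g1: "(\<integral>l. g l \<partial>L) = 1"
    and x1m: "x1 \<in> borel_measurable L" and x1p: "\<forall>l\<in>space L. 0 \<le> x1 l"
    and x2m: "x2 \<in> borel_measurable L" and x2p: "\<forall>l\<in>space L. 0 \<le> x2 l"
    and s: "\<forall>l\<in>space L. x1 l + x2 l = 1"
    and w1: "0 \<le> w1" and w2: "0 \<le> w2"
  shows "w1 * (\<integral>l. f l * x1 l \<partial>L) + w2 * (\<integral>l. g l * x2 l \<partial>L)
         \<le> w1 + w2 - (\<integral>l. min (w1 * f l) (w2 * g l) \<partial>L)"
proof -
  have i1: "integrable L (\<lambda>l. f l * x1 l)"
  proof (rule Bochner_Integration.integrable_bound[OF fi])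
    show "(\<lambda>l. f l * x1 l) \<in> borel_measurable L"
      using borel_measurable_integrable[OF fi] x1m by measurable
    show "AE l in L. norm (f l * x1 l) \<le> norm (f l)"
    proof (rule AE_I2)
      fix l assume l: "l \<in> space L"
      then have "0 \<le> x1 l" "x1 l \<le> 1" "0 \<le> f l" using x1p x2p s fp by force+
      then show "norm (f l * x1 l) \<le> norm (f l)"
        by (simp add: abs_mult mult_left_le)
    qed
  qed
  have i2: "integrable L (\<lambda>l. g l * x2 l)"
  proof (rule Bochner_Integration.integrable_bound[OF gi])
    show "(\<lambda>l. g l * x2 l) \<in> borel_measurable L"
      using borel_measurable_integrable[OF gi] x2m by measurable
    show "AE l in L. norm (g l * x2 l) \<le> norm (g l)"
    proof (rule AE_I2)
      fix l assume l: "l \<in> space L"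
      then have "0 \<le> x2 l" "x2 l \<le> 1" "0 \<le> g l" using x1p x2p s gp by force+
      then show "norm (g l * x2 l) \<le> norm (g l)"
        by (simp add: abs_mult mult_left_le)
    qed
  qed
  have im: "integrable L (\<lambda>l. min (w1 * f l) (w2 * g l))"
    using fi gi by (intro integrable_min) auto
  have "w1 * (\<integral>l. f l * x1 l \<partial>L) + w2 * (\<integral>l. g l * x2 l \<partial>L)
      = (\<integral>l. w1 * (f l * x1 l) + w2 * (g l * x2 l) \<partial>L)"
    using i1 i2 by simp
  also have "\<dots> \<le> (\<integral>l. w1 * f l + w2 * g l - min (w1 * f l) (w2 * g l) \<partial>L)"
  proof (rule integral_mono)
    show "integrable L (\<lambda>l. w1 * (f l * x1 l) + w2 * (g l * x2 l))" using i1 i2 by simp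
    show "integrable L (\<lambda>l. w1 * f l + w2 * g l - min (w1 * f l) (w2 * g l))"
      using fi gi im by simp
    fix l assume l: "l \<in> space L"
    then have a: "0 \<le> x1 l" "0 \<le> x2 l" "x1 l + x2 l = 1" "0 \<le> f l" "0 \<le> g l"
      using x1p x2p s fp gp by auto
    have "w1 * (f l * x1 l) + w2 * (g l * x2 l) \<le> max (w1 * f l) (w2 * g l) * x1 l + max (w1 * f l) (w2 * g l) * x2 l"
      using a by (intro add_mono) (auto simp: mult.assoc[symmetric] intro: mult_right_mono)
    also have "\<dots> = max (w1 * f l) (w2 * g l)" using a by (simp add: distrib_left[symmetric])
    also have "\<dots> = w1 * f l + w2 * g l - min (w1 * f l) (w2 * g l)" by (simp add: max_def min_def)
    finally show "w1 * (f l * x1 l) + w2 * (g l * x2 l) \<le> w1 * f l + w2 * g l - min (w1 * f l) (w2 * g l)" .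
  qed
  also have "\<dots> = w1 + w2 - (\<integral>l. min (w1 * f l) (w2 * g l) \<partial>L)"
    using fi gi im f1 g1 by simp
  finally show ?thesis .
qed

lemma psd_one: "psd n (1\<^sub>m n)"
proof -
  have eq: "(\<Sum>i<n. \<Sum>j<n. cnj (v $ i) * (1\<^sub>m n) $$ (i, j) * v $ j) = complex_of_real (\<Sum>i<n. (cmod (v $ i))\<^sup>2)" for v :: "complex vec"
  proof -
    have "(\<Sum>i<n. \<Sum>j<n. cnj (v $ i) * (1\<^sub>m n) $$ (i, j) * v $ j) = (\<Sum>i<n. cnj (v $ i) * v $ i)"
    proof (rule sum.cong[OF refl])
      fix i assume i: "i \<in> {..<n}"
      have "(\<Sum>j<n. cnj (v $ i) * (1\<^sub>m n) $$ (i, j) * v $ j) = (\<Sum>j<n. if j = i then cnj (v $ i) * v $ i else 0)"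
        using i by (intro sum.cong) auto
      then show "(\<Sum>j<n. cnj (v $ i) * (1\<^sub>m n) $$ (i, j) * v $ j) = cnj (v $ i) * v $ i"
        using i by simp
    qed
    also have "\<dots> = (\<Sum>i<n. complex_of_real ((cmod (v $ i))\<^sup>2))"
    proof (rule sum.cong[OF refl])
      fix i
      show "cnj (v $ i) * v $ i = complex_of_real ((cmod (v $ i))\<^sup>2)"
        unfolding complex_norm_square by (rule mult.commute)
    qed
    also have "\<dots> = complex_of_real (\<Sum>i<n. (cmod (v $ i))\<^sup>2)"
      by (rule of_real_sum[symmetric])
    finally show ?thesis .
  qed
  have nn: "0 \<le> (\<Sum>i<n. (cmod (v $ i))\<^sup>2)" for v :: "complex vec"
    by (rule sum_nonneg) simp
  show ?thesis unfolding psd_def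
  proof (intro conjI ballI)
    show "1\<^sub>m n \<in> carrier_mat n n" by simp
  next
    fix v :: "complex vec"
    show "(\<Sum>i<n. \<Sum>j<n. cnj (v $ i) * (1\<^sub>m n) $$ (i, j) * v $ j) \<in> \<real>"
      unfolding eq by (rule Reals_of_real)
    show "0 \<le> Re (\<Sum>i<n. \<Sum>j<n. cnj (v $ i) * (1\<^sub>m n) $$ (i, j) * v $ j)"
      unfolding eq Re_complex_of_real by (rule nn)
  qed
qed

lemma psd_zero: "psd n (0\<^sub>m n n)"
  unfolding psd_def by auto

lemma povm_ex: "povm n [1\<^sub>m n, 0\<^sub>m n n]"
  unfolding povm_def using psd_one psd_zero by auto

lemma DQw_bound:
  fixes L :: "'l measure"
  assumes om: "ontological_model n p1 p2 r L mu xi"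
    and a: "a \<in> {p1, p2, r}" and b: "b \<in> {p1, p2, r}"
    and w1: "0 \<le> w1" and w2: "0 \<le> w2"
  shows "DQw n a w1 b w2 \<le> w1 + w2 - (\<integral>l. min (w1 * mu a l) (w2 * mu b l) \<partial>L)"
  unfolding DQw_def
proof (rule cSup_least)
  show "{w1 * prob a Ms 1 + w2 * prob b Ms 2 |Ms. povm n Ms \<and> length Ms = 2} \<noteq> {}"
    using povm_ex[of n] by auto
  fix x assume "x \<in> {w1 * prob a Ms 1 + w2 * prob b Ms 2 |Ms. povm n Ms \<and> length Ms = 2}"
  then obtain Ms where Ms: "povm n Ms" "length Ms = 2" and x: "x = w1 * prob a Ms 1 + w2 * prob b Ms 2"
    by auto
  have A: "\<forall>\<sigma> \<in> {p1, p2, r}.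
        mu \<sigma> \<in> borel_measurable L \<and> integrable L (mu \<sigma>) \<and>
        (\<forall>l \<in> space L. 0 \<le> mu \<sigma> l) \<and> (\<integral>l. mu \<sigma> l \<partial>L) = 1"
    and B: "(\<forall>k \<in> {1..length Ms}. xi Ms k \<in> borel_measurable L \<and> (\<forall>l \<in> space L. 0 \<le> xi Ms k l)) \<and>
        (\<forall>l \<in> space L. (\<Sum>k = 1..length Ms. xi Ms k l) = 1) \<and>
        (\<forall>\<sigma> \<in> {p1, p2, r}. \<forall>k \<in> {1..length Ms}.
            prob \<sigma> Ms k = (\<integral>l. mu \<sigma> l * xi Ms k l \<partial>L))"
    using om Ms(1) unfolding ontological_model_def by blast+
  have s12: "{1..length Ms} = {1, 2::nat}" using Ms(2) by auto
  have pa: "prob a Ms 1 = (\<integral>l. mu a l * xi Ms 1 l \<partial>L)"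
    using B a s12 by (metis insertCI)
  have pb: "prob b Ms 2 = (\<integral>l. mu b l * xi Ms 2 l \<partial>L)"
    using B b s12 by (metis insertCI)
  have Aa: "integrable L (mu a)" "\<forall>l \<in> space L. 0 \<le> mu a l" "(\<integral>l. mu a l \<partial>L) = 1"
    using A a by blast+
  have Ab: "integrable L (mu b)" "\<forall>l \<in> space L. 0 \<le> mu b l" "(\<integral>l. mu b l \<partial>L) = 1"
    using A b by blast+
  have k1: "(1::nat) \<in> {1..length Ms}" and k2: "(2::nat) \<in> {1..length Ms}" using s12 by auto
  have X1: "xi Ms 1 \<in> borel_measurable L" "\<forall>l \<in> space L. 0 \<le> xi Ms 1 l"
    using B k1 by blast+
  have X2: "xi Ms 2 \<in> borel_measurable L" "\<forall>l \<in> space L. 0 \<le> xi Ms 2 l"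
    using B k2 by blast+
  have S: "\<forall>l \<in> space L. xi Ms 1 l + xi Ms 2 l = 1"
  proof
    fix l assume "l \<in> space L"
    then have "(\<Sum>k = 1..length Ms. xi Ms k l) = 1" using B by blast
    then show "xi Ms 1 l + xi Ms 2 l = 1" using s12 by simp
  qed
  show "x \<le> w1 + w2 - (\<integral>l. min (w1 * mu a l) (w2 * mu b l) \<partial>L)"
    unfolding x pa pb
    by (rule dist_bound[OF Aa Ab X1 X2 S w1 w2])
qed

lemma arith_fin:
  fixes w vA vB vC vE d1 d2 x vP vS a b :: real
  assumes "w = vA + vB + vC - 2*(a+b) - vE" "d1 \<le> (1+b)/2 + (a+b) - vB/2" "d2 \<le> (1+b)/2 + (a+b) - vC/2"
    "x \<le> 1 - a - vP/2" "vA - vE \<le> vP"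
  shows "2*(x + d1 + d2 - vS - 2*b - 1) \<le> 2*(1-vS) - w"
  using assms by (simp add: field_simps)

theorem theorem2:
  fixes n :: nat and \<psi>1 \<psi>2 :: "complex vec" and \<alpha> \<beta> :: real
    and L :: "'l measure" and mu :: "complex mat \<Rightarrow> 'l \<Rightarrow> real"
    and xi :: "complex mat list \<Rightarrow> nat \<Rightarrow> 'l \<Rightarrow> real"
  assumes "pure_state n \<psi>1" and "pure_state n \<psi>2"
    and "\<alpha> \<in> {0..1}" and "\<beta> \<in> {0..1}"
    and "ontological_model n (proj n \<psi>1) (proj n \<psi>2) (mixture n \<psi>1 \<psi>2) L mu xi"
  shows "omegaQ n (proj n \<psi>1) (proj n \<psi>2) \<alpha> \<beta>
           - omegaLambda L (mu (proj n \<psi>1)) (mu (proj n \<psi>2)) \<alpha> \<beta>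
         \<ge> BQ n (proj n \<psi>1) (proj n \<psi>2) (mixture n \<psi>1 \<psi>2) \<alpha> \<beta>"
proof -
  define p1 where "p1 = proj n \<psi>1"
  define p2 where "p2 = proj n \<psi>2"
  define r where "r = mixture n \<psi>1 \<psi>2"
  define m1 where "m1 = mu p1"
  define m2 where "m2 = mu p2"
  have om: "ontological_model n p1 p2 r L mu xi" using assms(5) unfolding p1_def p2_def r_def .
  have al: "0 \<le> \<alpha>" "\<alpha> \<le> 1" and be: "0 \<le> \<beta>" "\<beta> \<le> 1" using assms(3,4) by auto
  have A: "\<forall>\<sigma> \<in> {p1, p2, r}.
        mu \<sigma> \<in> borel_measurable L \<and> integrable L (mu \<sigma>) \<and>
        (\<forall>l \<in> space L. 0 \<le> mu \<sigma> l) \<and> (\<integral>l. mu \<sigma> l \<partial>L) = 1"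
    and R: "\<forall>l \<in> space L. mu r l = (mu p1 l + mu p2 l) / 2"
    using om unfolding ontological_model_def by blast+
  have i1: "integrable L m1" and i2: "integrable L m2"
    and n1: "\<forall>l\<in>space L. 0 \<le> m1 l" and n2: "\<forall>l\<in>space L. 0 \<le> m2 l"
    using A unfolding m1_def m2_def by auto
  define t1 where "t1 = (\<lambda>l. (1 + \<beta>) * m1 l)"
  define t2 where "t2 = (\<lambda>l. (1 + \<beta>) * m2 l)"
  define t3 where "t3 = (\<lambda>l. (\<alpha> + \<beta>) * (m1 l + m2 l))"
  have it1: "integrable L t1" and it2: "integrable L t2" and it3: "integrable L t3"
    unfolding t1_def t2_def t3_def using i1 i2 by auto
  define D where "D = DQ n p1 p2"
  define D1 where "D1 = DQw n p1 ((1 + \<beta>) / 2) r (\<alpha> + \<beta>)"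
  define D2 where "D2 = DQw n p2 ((1 + \<beta>) / 2) r (\<alpha> + \<beta>)"
  define S where "S = SGamQ n p1 p2 \<alpha> \<beta>"
  have hD: "D \<le> 1 - (\<integral>l. min (m1 l) (m2 l) \<partial>L) / 2"
  proof -
    have "D \<le> 1/2 + 1/2 - (\<integral>l. min (1/2 * m1 l) (1/2 * m2 l) \<partial>L)"
      unfolding D_def DQ_def m1_def m2_def by (rule DQw_bound[OF om]) auto
    also have "(\<integral>l. min (1/2 * m1 l) (1/2 * m2 l) \<partial>L) = (\<integral>l. min (m1 l) (m2 l) / 2 \<partial>L)"
      by (rule Bochner_Integration.integral_cong[OF refl]) (auto simp: min_def)
    also have "\<dots> = (\<integral>l. min (m1 l) (m2 l) \<partial>L) / 2" by simp
    finally show ?thesis by simp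
  qed
  have hD1: "D1 \<le> (1 + \<beta>) / 2 + (\<alpha> + \<beta>) - (\<integral>l. min (t1 l) (t3 l) \<partial>L) / 2"
  proof -
    have "D1 \<le> (1 + \<beta>) / 2 + (\<alpha> + \<beta>) - (\<integral>l. min ((1 + \<beta>) / 2 * mu p1 l) ((\<alpha> + \<beta>) * mu r l) \<partial>L)"
      unfolding D1_def using al be by (intro DQw_bound[OF om]) auto
    also have "(\<integral>l. min ((1 + \<beta>) / 2 * mu p1 l) ((\<alpha> + \<beta>) * mu r l) \<partial>L) = (\<integral>l. min (t1 l) (t3 l) / 2 \<partial>L)"
      by (rule Bochner_Integration.integral_cong[OF refl])
        (auto simp: R t1_def t3_def m1_def m2_def min_def)
    also have "\<dots> = (\<integral>l. min (t1 l) (t3 l) \<partial>L) / 2" by simp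
    finally show ?thesis .
  qed
  have hD2: "D2 \<le> (1 + \<beta>) / 2 + (\<alpha> + \<beta>) - (\<integral>l. min (t2 l) (t3 l) \<partial>L) / 2"
  proof -
    have "D2 \<le> (1 + \<beta>) / 2 + (\<alpha> + \<beta>) - (\<integral>l. min ((1 + \<beta>) / 2 * mu p2 l) ((\<alpha> + \<beta>) * mu r l) \<partial>L)"
      unfolding D2_def using al be by (intro DQw_bound[OF om]) auto
    also have "(\<integral>l. min ((1 + \<beta>) / 2 * mu p2 l) ((\<alpha> + \<beta>) * mu r l) \<partial>L) = (\<integral>l. min (t2 l) (t3 l) / 2 \<partial>L)"
      by (rule Bochner_Integration.integral_cong[OF refl])
        (auto simp: R t2_def t3_def m1_def m2_def min_def)
    also have "\<dots> = (\<integral>l. min (t2 l) (t3 l) \<partial>L) / 2" by simp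
    finally show ?thesis .
  qed
  have hDa: "(1 - \<alpha>) * D \<le> (1 - \<alpha>) * (1 - (\<integral>l. min (m1 l) (m2 l) \<partial>L) / 2)"
    using hD al by (intro mult_left_mono) auto
  have hDb: "(1 - \<alpha>) * D \<le> (1 - \<alpha>) - ((1 - \<alpha>) * (\<integral>l. min (m1 l) (m2 l) \<partial>L)) / 2"
    using hDa by (simp add: algebra_simps)
  have hP: "(\<integral>l. min (t1 l) (t2 l) \<partial>L) - (\<integral>l. min (min (t1 l) (t2 l)) (t3 l) \<partial>L)
     \<le> (1 - \<alpha>) * (\<integral>l. min (m1 l) (m2 l) \<partial>L)"
  proof -
    have "(\<integral>l. min (t1 l) (t2 l) \<partial>L) - (\<integral>l. min (min (t1 l) (t2 l)) (t3 l) \<partial>L)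
        = (\<integral>l. min (t1 l) (t2 l) - min (min (t1 l) (t2 l)) (t3 l) \<partial>L)"
      using it1 it2 it3 by (simp add: integrable_min)
    also have "\<dots> \<le> (\<integral>l. (1 - \<alpha>) * min (m1 l) (m2 l) \<partial>L)"
    proof (rule integral_mono)
      show "integrable L (\<lambda>l. min (t1 l) (t2 l) - min (min (t1 l) (t2 l)) (t3 l))"
        using it1 it2 it3 by (simp add: integrable_min)
      show "integrable L (\<lambda>l. (1 - \<alpha>) * min (m1 l) (m2 l))"
        using i1 i2 by (simp add: integrable_min)
      fix l assume l: "l \<in> space L"
      then have a: "0 \<le> m1 l" "0 \<le> m2 l" using n1 n2 by auto
      have e: "min (t1 l) (t2 l) = (1 + \<beta>) * min (m1 l) (m2 l)"
        unfolding t1_def t2_def using be by (simp add: min_def)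
      have "(\<alpha> + \<beta>) * min (m1 l) (m2 l) \<le> t3 l"
        unfolding t3_def using a al be by (intro mult_left_mono) auto
      then show "min (t1 l) (t2 l) - min (min (t1 l) (t2 l)) (t3 l) \<le> (1 - \<alpha>) * min (m1 l) (m2 l)"
        unfolding e using a al be mult_left_le_one_le[of "min (m1 l) (m2 l)" \<alpha>]
        by (auto simp: min_def algebra_simps)
    qed
    also have "\<dots> = (1 - \<alpha>) * (\<integral>l. min (m1 l) (m2 l) \<partial>L)" by simp
    finally show ?thesis .
  qed
  have "omegaLambda L m1 m2 \<alpha> \<beta> = (\<integral>l. min (t1 l) (t2 l) \<partial>L) + (\<integral>l. min (t1 l) (t3 l) \<partial>L)
        + (\<integral>l. min (t2 l) (t3 l) \<partial>L) - 2 * (\<alpha> + \<beta>)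
        - (\<integral>l. min (min (t1 l) (t2 l)) (t3 l) \<partial>L)"
    unfolding omegaLambda_def Let_def t1_def t2_def t3_def ..
  note eq = this
  show ?thesis
    unfolding omegaQ_def BQ_def
    unfolding p1_def[symmetric] p2_def[symmetric] r_def[symmetric] m1_def[symmetric] m2_def[symmetric]
    unfolding D_def[symmetric] D1_def[symmetric] D2_def[symmetric] S_def[symmetric]
    by (rule arith_fin[OF eq hD1 hD2 hDb hP])
qed

end
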